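(* Let $k$ be an odd positive integer. There are constants $c_0,c>0$ such that for every $0<\varepsilon\le c_0$ there is an $(\varepsilon,0)$-differentially private algorithm that, given any Max-$k$XOR instance $\Phi$, returns an assignment $x\in\{\pm1\}^n$ with $$\mathbb E[\mathrm{val}_\Phi(x)]\ \ge\ \left(\frac12+c\,\varepsilon\right)\mathrm{OPT},$$ where $\mathrm{OPT}$ is the number of constraints satisfied by an optimal assignment.
   Context: A Max-$k$XOR instance on variables $x_1,\dots,x_n\in\{\pm1\}$ consists of $m$ constraints, each with a scope $S_\ell\subseteq[n]$ of $k$ variables and a sign $b_\ell\in\{\pm1\}$, satisfied iff $b_\ell\prod_{i\in S_\ell}x_i=1$; scopes are assumed distinct as sets. $\mathrm{val}_\Phi(x)$ is the number of satisfied constraints. No triangle-freeness or degree bound is assumed. Neighboring instances differ by adding or removing one constraint ($n$ public); $(\varepsilon,0)$-DP means $\Pr[\mathcal M(\Phi)\in T]\le e^\varepsilon\Pr[\mathcal M(\Phi')\in T]$ for all neighbors and output sets $T$. *)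

theory Defs
  imports "HOL-Probability.Probability"
begin

text \<open>A constraint is a pair (S, b): scope S (a set of variable indices) and sign b in {-1,1}.
  Variables are indexed by {..<n}; an assignment is an element of {..<n} ->E {-1,1}.\<close>

type_synonym constraint = "nat set \<times> int"
type_synonym assignment = "nat \<Rightarrow> int"

definition assignments :: "nat \<Rightarrow> assignment set" where
  "assignments n = ({..<n} \<rightarrow>\<^sub>E {-1, 1})"

definition satisfies :: "assignment \<Rightarrow> constraint \<Rightarrow> bool" where
  "satisfies x c \<longleftrightarrow> snd c * (\<Prod>i\<in>fst c. x i) = 1"

definition kxor_instance :: "nat \<Rightarrow> nat \<Rightarrow> constraint set \<Rightarrow> bool" where
  "kxor_instance k n \<Phi> \<longleftrightarrow> finite \<Phi> \<and>
     (\<forall>c\<in>\<Phi>. fst c \<subseteq> {..<n} \<and> card (fst c) = k \<and> snd c \<in> {-1, 1}) \<and>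
     inj_on fst \<Phi>"

definition val :: "constraint set \<Rightarrow> assignment \<Rightarrow> nat" where
  "val \<Phi> x = card {c\<in>\<Phi>. satisfies x c}"

definition OPT :: "nat \<Rightarrow> constraint set \<Rightarrow> nat" where
  "OPT n \<Phi> = Max (val \<Phi> ` assignments n)"

definition neighbors :: "constraint set \<Rightarrow> constraint set \<Rightarrow> bool" where
  "neighbors \<Phi> \<Phi>' \<longleftrightarrow> (\<exists>c. c \<notin> \<Phi> \<and> \<Phi>' = insert c \<Phi>) \<or> (\<exists>c. c \<notin> \<Phi>' \<and> \<Phi> = insert c \<Phi>')"

definition pure_dp :: "nat \<Rightarrow> real \<Rightarrow> (nat \<Rightarrow> constraint set \<Rightarrow> assignment pmf) \<Rightarrow> bool" where
  "pure_dp k \<epsilon> M \<longleftrightarrow>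
     (\<forall>n \<Phi> \<Phi>' T. kxor_instance k n \<Phi> \<and> kxor_instance k n \<Phi>' \<and> neighbors \<Phi> \<Phi>' \<longrightarrow>
        measure_pmf.prob (M n \<Phi>) T \<le> exp \<epsilon> * measure_pmf.prob (M n \<Phi>') T)"

end

theory Submission
  imports Defs
begin


definition mulA :: "nat \<Rightarrow> assignment \<Rightarrow> assignment \<Rightarrow> assignment" where
  "mulA n y z = (\<lambda>i. if i < n then y i * z i else undefined)"

lemma assignments_finite: "finite (assignments n)"
  unfolding assignments_def by (intro finite_PiE) auto

lemma one_in_assignments: "(\<lambda>i. if i < n then 1 else undefined) \<in> assignments n"
  unfolding assignments_def by (auto simp: PiE_iff extensional_def)

lemma assignments_nonempty: "assignments n \<noteq> {}"
  using one_in_assignments by blast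

lemma mulA_in: "y \<in> assignments n \<Longrightarrow> z \<in> assignments n \<Longrightarrow> mulA n y z \<in> assignments n"
proof -
  assume y: "y \<in> assignments n" and z: "z \<in> assignments n"
  have "\<And>i. i < n \<Longrightarrow> y i * z i \<in> {-1, 1}"
  proof -
    fix i assume "i < n"
    then have "y i \<in> {-1,1}" "z i \<in> {-1,1}" using y z unfolding assignments_def by auto
    then show "y i * z i \<in> {-1, 1}" by auto
  qed
  then show ?thesis unfolding assignments_def mulA_def by (auto simp: PiE_iff extensional_def)
qed

lemma mulA_inv:
  assumes y: "y \<in> assignments n" and z: "z \<in> assignments n"
  shows "mulA n (mulA n y z) z = y"
proof (rule ext)
  fix i
  show "mulA n (mulA n y z) z i = y i"
  proof (cases "i < n")
    case True
    then have "z i \<in> {-1,1}" using z unfolding assignments_def by auto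
    then have "z i * z i = 1" by auto
    then show ?thesis using True unfolding mulA_def by (simp add: mult.assoc)
  next
    case False
    then show ?thesis using y unfolding mulA_def assignments_def by (auto simp: PiE_iff extensional_def)
  qed
qed

lemma sum_shift:
  assumes "z \<in> assignments n"
  shows "(\<Sum>y\<in>assignments n. F (mulA n y z)) = (\<Sum>y\<in>assignments n. (F y :: real))"
  by (rule sum.reindex_bij_witness[of _ "\<lambda>y. mulA n y z" "\<lambda>y. mulA n y z"])
     (auto simp: mulA_in mulA_inv assms)

definition chi :: "assignment \<Rightarrow> nat set \<Rightarrow> real" where
  "chi x S = real_of_int (\<Prod>i\<in>S. x i)"

lemma chi_mul:
  assumes "S \<subseteq> {..<n}"
  shows "chi (mulA n y z) S = chi y S * chi z S"
proof -
  have "(\<Prod>i\<in>S. mulA n y z i) = (\<Prod>i\<in>S. y i * z i)"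
    using assms by (intro prod.cong) (auto simp: mulA_def)
  then show ?thesis unfolding chi_def by (simp add: prod.distrib)
qed

definition gB :: "assignment \<Rightarrow> constraint set \<Rightarrow> real" where
  "gB x B = (\<Prod>l\<in>B. chi x (fst l))"

lemma gB_mul:
  assumes "\<forall>l\<in>B. fst l \<subseteq> {..<n}"
  shows "gB (mulA n y z) B = gB y B * gB z B"
  unfolding gB_def using assms by (simp add: chi_mul prod.distrib)

lemma sum_gB_nonneg:
  assumes "\<forall>l\<in>B. fst l \<subseteq> {..<n}"
  shows "0 \<le> (\<Sum>y\<in>assignments n. gB y B)"
proof -
  define A where "A = (\<Sum>y\<in>assignments n. gB y B)"
  have "A * A = (\<Sum>z\<in>assignments n. \<Sum>y\<in>assignments n. gB y B * gB z B)"
    unfolding A_def by (simp add: sum_distrib_left sum_distrib_right mult.commute)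
  also have "\<dots> = (\<Sum>z\<in>assignments n. \<Sum>y\<in>assignments n. gB (mulA n y z) B)"
    using gB_mul[OF assms] by simp
  also have "\<dots> = (\<Sum>z\<in>assignments n. A)"
    unfolding A_def by (intro sum.cong refl sum_shift[where F="\<lambda>y. gB y B"])
  also have "\<dots> = real (card (assignments n)) * A" by simp
  finally have eq: "A * A = real (card (assignments n)) * A" .
  show ?thesis
  proof (rule ccontr)
    assume "\<not> 0 \<le> (\<Sum>y\<in>assignments n. gB y B)"
    then have "A < 0" unfolding A_def by simp
    then have "A * A > 0" by (simp add: mult_neg_neg)
    moreover have "real (card (assignments n)) * A \<le> 0"
      using \<open>A < 0\<close> by (simp add: mult_nonneg_nonpos)
    ultimately show False using eq by simp
  qed
qed



definition sg :: "constraint \<Rightarrow> assignment \<Rightarrow> real" where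
  "sg l x = real_of_int (snd l) * chi x (fst l)"

lemma prod_pm1:
  assumes "x \<in> assignments n" "S \<subseteq> {..<n}"
  shows "(\<Prod>i\<in>S. x i) \<in> {-1, 1}"
proof -
  have "\<And>i. i \<in> S \<Longrightarrow> \<bar>x i\<bar> = 1"
  proof -
    fix i assume "i \<in> S"
    then have "x i \<in> {-1,1}" using assms unfolding assignments_def by auto
    then show "\<bar>x i\<bar> = 1" by auto
  qed
  then have "\<bar>\<Prod>i\<in>S. x i\<bar> = 1" by (simp add: abs_prod)
  then show ?thesis by (auto simp: abs_if split: if_splits)
qed

lemma sg_cases:
  assumes "kxor_instance k n \<Phi>" "l \<in> \<Phi>" "x \<in> assignments n"
  shows "(sg l x = 1 \<and> satisfies x l) \<or> (sg l x = -1 \<and> \<not> satisfies x l)"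
proof -
  have sub: "fst l \<subseteq> {..<n}" and b: "snd l \<in> {-1,1}"
    using assms unfolding kxor_instance_def by auto
  have p: "(\<Prod>i\<in>fst l. x i) \<in> {-1,1}" using prod_pm1[OF assms(3) sub] .
  define v where "v = snd l * (\<Prod>i\<in>fst l. x i)"
  have "v \<in> {-1,1}" using p b unfolding v_def by auto
  moreover have "sg l x = real_of_int v"
    unfolding sg_def chi_def v_def by simp
  moreover have "satisfies x l \<longleftrightarrow> v = 1" unfolding satisfies_def v_def ..
  ultimately show ?thesis by auto
qed

lemma exp_sat:
  assumes "kxor_instance k n \<Phi>" "l \<in> \<Phi>" "x \<in> assignments n"
  shows "exp (lam * of_bool (satisfies x l)) = (exp lam + 1)/2 + (exp lam - 1)/2 * sg l x"
  using sg_cases[OF assms] by (auto simp: field_simps)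

lemma sg_G:
  assumes "kxor_instance k n \<Phi>" "l \<in> \<Phi>" "satisfies xs l" "xs \<in> assignments n" "x \<in> assignments n"
  shows "sg l x = chi (mulA n x xs) (fst l)"
proof -
  have sub: "fst l \<subseteq> {..<n}" and b: "snd l \<in> {-1,1}"
    using assms unfolding kxor_instance_def by auto
  have "snd l * (\<Prod>i\<in>fst l. xs i) = 1" using assms(3) unfolding satisfies_def .
  then have "snd l = (\<Prod>i\<in>fst l. xs i)" using b by auto
  then have "real_of_int (snd l) = chi xs (fst l)" unfolding chi_def by simp
  then show ?thesis unfolding sg_def using chi_mul[OF sub] by simp
qed

lemma key:
  assumes inst: "kxor_instance k n \<Phi>" and xs: "xs \<in> assignments n"
    and G: "G = {c\<in>\<Phi>. satisfies xs c}" and a: "0 \<le> a" and d: "0 \<le> d"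
  shows "real (card (assignments n)) * a ^ card G \<le>
         (\<Sum>x\<in>assignments n. \<Prod>l\<in>G. a + d * sg l x)"
proof -
  have finG: "finite G" using inst G unfolding kxor_instance_def by auto
  have subs: "\<forall>l\<in>B. fst l \<subseteq> {..<n}" if "B \<in> Pow G" for B
    using that inst G unfolding kxor_instance_def by auto
  let ?c = "\<lambda>B. d ^ card B * a ^ card (G - B)"
  have step: "(\<Prod>l\<in>G. a + d * sg l x) = (\<Sum>B\<in>Pow G. ?c B * gB (mulA n x xs) B)"
    if x: "x \<in> assignments n" for x
  proof -
    have "(\<Prod>l\<in>G. a + d * sg l x) = (\<Prod>l\<in>G. d * chi (mulA n x xs) (fst l) + a)"
      using sg_G[OF inst _ _ xs x] G by (intro prod.cong) auto
    also have "\<dots> = (\<Sum>B\<in>Pow G. (\<Prod>l\<in>B. d * chi (mulA n x xs) (fst l)) * (\<Prod>l\<in>G-B. a))"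
      by (rule prod_add[OF finG])
    also have "\<dots> = (\<Sum>B\<in>Pow G. ?c B * gB (mulA n x xs) B)"
      by (intro sum.cong refl) (simp add: prod.distrib gB_def)
    finally show ?thesis .
  qed
  have "(\<Sum>x\<in>assignments n. \<Prod>l\<in>G. a + d * sg l x)
      = (\<Sum>x\<in>assignments n. \<Sum>B\<in>Pow G. ?c B * gB (mulA n x xs) B)"
    using step by (intro sum.cong) auto
  also have "\<dots> = (\<Sum>B\<in>Pow G. ?c B * (\<Sum>x\<in>assignments n. gB (mulA n x xs) B))"
    by (subst sum.swap) (simp add: sum_distrib_left)
  also have "\<dots> = (\<Sum>B\<in>Pow G. ?c B * (\<Sum>y\<in>assignments n. gB y B))"
    using sum_shift[OF xs, where F="\<lambda>y. gB y _"] by simp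
  also have "\<dots> = ?c {} * (\<Sum>y\<in>assignments n. gB y {}) +
       (\<Sum>B\<in>Pow G - {{}}. ?c B * (\<Sum>y\<in>assignments n. gB y B))"
    using finG by (subst sum.remove[of _ "{}"]) auto
  also have "\<dots> \<ge> ?c {} * (\<Sum>y\<in>assignments n. gB y {})"
    using subs a d by (intro add_increasing2 sum_nonneg mult_nonneg_nonneg sum_gB_nonneg) auto
  finally show ?thesis by (simp add: gB_def mult.commute)
qed



definition gibbs :: "'a set \<Rightarrow> ('a \<Rightarrow> real) \<Rightarrow> 'a pmf" where
  "gibbs A w = embed_pmf (\<lambda>x. if x \<in> A then w x / sum w A else 0)"

lemma pmf_gibbs:
  assumes fin: "finite A" and ne: "A \<noteq> {}" and pos: "\<forall>x\<in>A. 0 < w x"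
  shows "pmf (gibbs A w) x = (if x \<in> A then w x / sum w A else 0)"
proof -
  let ?f = "\<lambda>x. if x \<in> A then w x / sum w A else 0"
  have Z: "0 < sum w A" using fin ne pos by (intro sum_pos) auto
  have nn: "\<And>x. 0 \<le> ?f x" using Z pos by auto
  have "(\<integral>\<^sup>+x. ennreal (?f x) \<partial>count_space UNIV) = (\<integral>\<^sup>+x. ennreal (?f x) * indicator A x \<partial>count_space UNIV)"
    by (intro nn_integral_cong) (auto simp: indicator_def)
  also have "\<dots> = (\<integral>\<^sup>+x. ennreal (?f x) \<partial>count_space A)"
    by (simp add: nn_integral_count_space_indicator)
  also have "\<dots> = (\<Sum>x\<in>A. ennreal (?f x))"
    using fin by (simp add: nn_integral_count_space_finite)
  also have "\<dots> = ennreal (\<Sum>x\<in>A. ?f x)"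
    by (rule sum_ennreal) (use nn in blast)
  also have "(\<Sum>x\<in>A. ?f x) = (\<Sum>x\<in>A. w x / sum w A)" by simp
  also have "\<dots> = 1" using Z by (simp add: sum_divide_distrib[symmetric])
  finally have prob: "(\<integral>\<^sup>+x. ennreal (?f x) \<partial>count_space UNIV) = 1" by simp
  show ?thesis unfolding gibbs_def using pmf_embed_pmf[of ?f, OF nn prob] by simp
qed

lemma set_gibbs:
  assumes "finite A" "A \<noteq> {}" "\<forall>x\<in>A. 0 < w x"
  shows "set_pmf (gibbs A w) \<subseteq> A"
  using pmf_gibbs[OF assms] by (auto simp: set_pmf_iff split: if_splits)

lemma prob_gibbs:
  assumes "finite A" "A \<noteq> {}" "\<forall>x\<in>A. 0 < w x"
  shows "measure_pmf.prob (gibbs A w) T = (\<Sum>x\<in>T \<inter> A. w x / sum w A)"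
proof -
  have s: "set_pmf (gibbs A w) \<subseteq> A" using set_gibbs[OF assms] .
  have "measure_pmf.prob (gibbs A w) T = measure_pmf.prob (gibbs A w) (T \<inter> set_pmf (gibbs A w))"
    by (simp add: measure_Int_set_pmf)
  also have "T \<inter> set_pmf (gibbs A w) = (T \<inter> A) \<inter> set_pmf (gibbs A w)" using s by blast
  also have "measure_pmf.prob (gibbs A w) \<dots> = measure_pmf.prob (gibbs A w) (T \<inter> A)"
    by (simp add: measure_Int_set_pmf)
  also have "\<dots> = sum (pmf (gibbs A w)) (T \<inter> A)"
    using assms(1) by (simp add: measure_measure_pmf_finite)
  also have "\<dots> = (\<Sum>x\<in>T \<inter> A. w x / sum w A)"
    using pmf_gibbs[OF assms] by (intro sum.cong) auto
  finally show ?thesis .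
qed

lemma expectation_gibbs:
  assumes "finite A" "A \<noteq> {}" "\<forall>x\<in>A. 0 < w x"
  shows "measure_pmf.expectation (gibbs A w) (f :: _ \<Rightarrow> real) = (\<Sum>x\<in>A. (w x / sum w A) * f x)"
proof -
  have "measure_pmf.expectation (gibbs A w) f = (\<Sum>x\<in>A. f x * pmf (gibbs A w) x)"
    using set_gibbs[OF assms] assms(1) by (intro integral_measure_pmf_real) auto
  also have "\<dots> = (\<Sum>x\<in>A. (w x / sum w A) * f x)"
    using pmf_gibbs[OF assms] by (intro sum.cong) auto
  finally show ?thesis .
qed

lemma gibbs_ineq:
  assumes fin: "finite A" and ne: "A \<noteq> {}" and w: "\<forall>x\<in>A. w x = exp (lam * v x)"
  shows "ln (sum w A / card A) \<le> lam * (\<Sum>x\<in>A. (w x / sum w A) * v x)"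
proof -
  have pos: "\<forall>x\<in>A. 0 < w x" using w by auto
  define Z where "Z = sum w A"
  define N where "N = real (card A)"
  have Z: "0 < Z" unfolding Z_def using fin ne pos by (intro sum_pos) auto
  have N: "0 < N" unfolding N_def using fin ne by (simp add: card_gt_0_iff)
  have each: "(w x / Z) * (ln (Z / N) - lam * v x) \<le> 1 / N - w x / Z" if x: "x \<in> A" for x
  proof -
    have wx: "0 < w x" using pos x by auto
    have "ln ((Z/N) / w x) \<le> (Z/N) / w x - 1" using Z N wx by (intro ln_le_minus_one) auto
    moreover have "ln ((Z/N) / w x) = ln (Z / N) - lam * v x"
      using Z N wx w x by (simp add: ln_div ln_mult)
    ultimately have "ln (Z / N) - lam * v x \<le> (Z/N) / w x - 1" by simp
    then have "(w x / Z) * (ln (Z / N) - lam * v x) \<le> (w x / Z) * ((Z/N) / w x - 1)"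
      using Z wx by (intro mult_left_mono) auto
    also have "\<dots> = 1 / N - w x / Z" using Z wx N by (simp add: field_simps)
    finally show ?thesis .
  qed
  have sp: "(\<Sum>x\<in>A. w x / Z) = 1" using Z unfolding Z_def by (simp add: sum_divide_distrib[symmetric])
  have "(\<Sum>x\<in>A. (w x / Z) * (ln (Z / N) - lam * v x)) \<le> (\<Sum>x\<in>A. 1 / N - w x / Z)"
    using each by (intro sum_mono) auto
  also have "\<dots> = 0" using N sp unfolding N_def by (simp add: sum_subtractf)
  finally have "(\<Sum>x\<in>A. (w x / Z) * (ln (Z / N) - lam * v x)) \<le> 0" .
  moreover have "(\<Sum>x\<in>A. (w x / Z) * (ln (Z / N) - lam * v x))
      = ln (Z / N) * (\<Sum>x\<in>A. w x / Z) - lam * (\<Sum>x\<in>A. (w x / Z) * v x)"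
    by (simp add: algebra_simps sum_subtractf sum_distrib_left sum_distrib_right)
  ultimately show ?thesis using sp unfolding Z_def N_def by simp
qed

lemma ln_a_bound:
  fixes e :: real
  assumes "0 < e" "e \<le> 1"
  shows "e / 2 + e^2 / 32 \<le> ln ((exp e + 1) / 2)"
proof -
  define t where "t = exp (e/2)"
  define y where "y = e^2/32"
  have tt: "t * t = exp e" unfolding t_def by (simp flip: exp_add)
  have t1: "1 + e/2 \<le> t" unfolding t_def using exp_ge_add_one_self[of "e/2"] by simp
  have "exp e \<le> exp 1" using assms by simp
  also have "exp 1 \<le> (3::real)" using exp_le by simp
  finally have "t * t \<le> 3" using tt by simp
  have t2: "t \<le> 2"
  proof (rule ccontr)
    assume "\<not> t \<le> 2"
    then have "2 * 2 < t * t" by (intro mult_strict_mono) auto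
    then show False using \<open>t * t \<le> 3\<close> by simp
  qed
  have y: "0 < y" "y \<le> 1/32" using assms unfolding y_def by (auto simp: power2_eq_square intro: mult_le_one)
  have "1 - y \<le> exp (-y)" using exp_ge_add_one_self[of "-y"] by simp
  then have ey: "exp y * (1 - y) \<le> 1" by (simp add: exp_minus field_simps)
  have ey2: "exp y \<le> 1 + 2 * y"
  proof -
    have "exp y * (1 - y) * (1 + 2*y) \<le> 1 + 2*y" using mult_right_mono[OF ey, of "1 + 2*y"] y by simp
    moreover have "(1 - y) * (1 + 2*y) \<ge> 1"
    proof -
      have "0 \<le> y * (1 - 2*y)" using y by (intro mult_nonneg_nonneg) auto
      moreover have "(1 - y) * (1 + 2*y) = 1 + y * (1 - 2*y)" by (simp add: algebra_simps)
      ultimately show ?thesis by linarith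
    qed
    ultimately have h1: "exp y * ((1 - y) * (1 + 2*y)) \<le> 1 + 2*y"
      and h2: "1 \<le> (1 - y) * (1 + 2*y)" by (simp_all add: mult.assoc)
    have "exp y * 1 \<le> exp y * ((1 - y) * (1 + 2*y))"
      using h2 by (intro mult_left_mono) auto
    then show ?thesis using h1 by linarith
  qed
  have "(e/2)^2 \<le> (t - 1)^2" using t1 assms by (intro power_mono) auto
  moreover have "(t*t + 1)/2 = t + (t - 1)^2 / 2" by (simp add: power2_eq_square field_simps)
  ultimately have "(t*t + 1)/2 \<ge> t + e^2/8" by (simp add: power_divide)
  moreover have "t * (1 + 2 * y) \<le> t + e^2/8"
  proof -
    have "t * (2 * y) \<le> 2 * (2 * y)" using t2 y by (intro mult_right_mono) auto
    then show ?thesis unfolding y_def by (simp add: algebra_simps)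
  qed
  moreover have "t * exp y \<le> t * (1 + 2*y)" using ey2 t1 assms by (intro mult_left_mono) auto
  ultimately have "t * exp y \<le> (t * t + 1)/2" by linarith
  then have "t * exp y \<le> (exp e + 1)/2" using tt by simp
  moreover have "t * exp y = exp (e/2 + e^2/32)" unfolding t_def y_def by (simp add: exp_add)
  ultimately have "exp (e/2 + e^2/32) \<le> (exp e + 1)/2" by simp
  then have "ln (exp (e/2 + e^2/32)) \<le> ln ((exp e + 1)/2)"
    by (subst ln_le_cancel_iff) (auto simp: add_pos_pos)
  then show ?thesis by (simp only: ln_exp)
qed



lemma val_sum: "finite \<Phi> \<Longrightarrow> real (val \<Phi> x) = (\<Sum>l\<in>\<Phi>. of_bool (satisfies x l))"
  unfolding val_def by (simp add: Int_def conj_commute)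

lemma val_insert:
  assumes "finite \<Phi>" "c \<notin> \<Phi>"
  shows "real (val (insert c \<Phi>) x) = real (val \<Phi> x) + of_bool (satisfies x c)"
  using assms by (simp add: val_sum)

lemma dp_core:
  fixes W W' Z Z' al be :: real
  assumes "0 < Z" "0 < Z'" "0 \<le> W'" "W \<le> al * W'" "Z' \<le> be * Z" "0 \<le> al" "0 \<le> be"
  shows "W / Z \<le> al * be * (W' / Z')"
proof -
  have "W / Z \<le> al * W' / Z" using assms by (simp add: divide_right_mono)
  also have "al * W' / Z = al * W' * (1 / Z)" by simp
  also have "1 / Z \<le> be / Z'" using assms by (simp add: field_simps)
  then have "al * W' * (1 / Z) \<le> al * W' * (be / Z')"
    using assms by (intro mult_left_mono) auto
  also have "\<dots> = al * be * (W' / Z')" by simp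
  finally show ?thesis by simp
qed

definition Wt :: "real \<Rightarrow> constraint set \<Rightarrow> assignment \<Rightarrow> real" where
  "Wt e \<Phi> x = exp (e * real (val \<Phi> x))"

definition Mech :: "real \<Rightarrow> nat \<Rightarrow> constraint set \<Rightarrow> assignment pmf" where
  "Mech e n \<Phi> = gibbs (assignments n) (Wt e \<Phi>)"

lemma Wt_pos: "\<forall>x\<in>A. 0 < Wt e \<Phi> x" unfolding Wt_def by simp

lemma dp_dir:
  assumes "0 \<le> e" "\<forall>x\<in>assignments n. Wt e \<Phi> x \<le> al * Wt e \<Phi>' x"
    "sum (Wt e \<Phi>') (assignments n) \<le> be * sum (Wt e \<Phi>) (assignments n)"
    "0 \<le> al" "0 \<le> be" "al * be \<le> exp e"
  shows "measure_pmf.prob (Mech e n \<Phi>) T \<le> exp e * measure_pmf.prob (Mech e n \<Phi>') T"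
proof -
  let ?A = "assignments n"
  have fin: "finite ?A" and ne: "?A \<noteq> {}" by (simp_all add: assignments_finite assignments_nonempty)
  have Z: "0 < sum (Wt e \<Phi>) ?A" "0 < sum (Wt e \<Phi>') ?A"
    using fin ne by (auto intro!: sum_pos simp: Wt_def)
  have "measure_pmf.prob (Mech e n \<Phi>) T = (\<Sum>x\<in>T \<inter> ?A. Wt e \<Phi> x / sum (Wt e \<Phi>) ?A)"
    unfolding Mech_def using prob_gibbs[OF fin ne Wt_pos] .
  also have "\<dots> \<le> (\<Sum>x\<in>T \<inter> ?A. exp e * (Wt e \<Phi>' x / sum (Wt e \<Phi>') ?A))"
  proof (intro sum_mono)
    fix x assume x: "x \<in> T \<inter> ?A"
    have "Wt e \<Phi> x / sum (Wt e \<Phi>) ?A \<le> al * be * (Wt e \<Phi>' x / sum (Wt e \<Phi>') ?A)"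
      using assms x Z by (intro dp_core) (auto simp: Wt_def)
    also have "\<dots> \<le> exp e * (Wt e \<Phi>' x / sum (Wt e \<Phi>') ?A)"
      using assms Z by (intro mult_right_mono) (auto simp: Wt_def)
    finally show "Wt e \<Phi> x / sum (Wt e \<Phi>) ?A \<le> exp e * (Wt e \<Phi>' x / sum (Wt e \<Phi>') ?A)" .
  qed
  also have "\<dots> = exp e * measure_pmf.prob (Mech e n \<Phi>') T"
    unfolding Mech_def prob_gibbs[OF fin ne Wt_pos] by (simp add: sum_distrib_left)
  finally show ?thesis .
qed

lemma Mech_dp:
  assumes "0 \<le> e"
  shows "pure_dp k e (Mech e)"
  unfolding pure_dp_def
proof (intro allI impI)
  fix n \<Phi> \<Phi>' T
  assume H: "kxor_instance k n \<Phi> \<and> kxor_instance k n \<Phi>' \<and> neighbors \<Phi> \<Phi>'"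
  then have f1: "finite \<Phi>" and f2: "finite \<Phi>'" unfolding kxor_instance_def by auto
  let ?A = "assignments n"
  from H have "(\<exists>c. c \<notin> \<Phi> \<and> \<Phi>' = insert c \<Phi>) \<or> (\<exists>c. c \<notin> \<Phi>' \<and> \<Phi> = insert c \<Phi>')"
    unfolding neighbors_def by auto
  then show "measure_pmf.prob (Mech e n \<Phi>) T \<le> exp e * measure_pmf.prob (Mech e n \<Phi>') T"
  proof
    assume "\<exists>c. c \<notin> \<Phi> \<and> \<Phi>' = insert c \<Phi>"
    then obtain c where c: "c \<notin> \<Phi>" "\<Phi>' = insert c \<Phi>" by blast
    have w: "Wt e \<Phi>' x = Wt e \<Phi> x * exp (e * of_bool (satisfies x c))" for x
      unfolding Wt_def c(2) val_insert[OF f1 c(1)] by (simp add: algebra_simps exp_add)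
    have le1: "Wt e \<Phi> x \<le> 1 * Wt e \<Phi>' x" for x
      unfolding w using assms by (simp add: Wt_def)
    have le2: "Wt e \<Phi>' x \<le> exp e * Wt e \<Phi> x" for x
      unfolding w using assms by (simp add: Wt_def)
    have "sum (Wt e \<Phi>') ?A \<le> sum (\<lambda>x. exp e * Wt e \<Phi> x) ?A" by (intro sum_mono le2)
    then have "sum (Wt e \<Phi>') ?A \<le> exp e * sum (Wt e \<Phi>) ?A" by (simp add: sum_distrib_left)
    then show ?thesis using le1 assms by (intro dp_dir[where al=1 and be="exp e"]) auto
  next
    assume "\<exists>c. c \<notin> \<Phi>' \<and> \<Phi> = insert c \<Phi>'"
    then obtain c where c: "c \<notin> \<Phi>'" "\<Phi> = insert c \<Phi>'" by blast
    have w: "Wt e \<Phi> x = Wt e \<Phi>' x * exp (e * of_bool (satisfies x c))" for x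
      unfolding Wt_def c(2) val_insert[OF f2 c(1)] by (simp add: algebra_simps exp_add)
    have le1: "Wt e \<Phi> x \<le> exp e * Wt e \<Phi>' x" for x
      unfolding w using assms by (simp add: Wt_def)
    have le2: "Wt e \<Phi>' x \<le> 1 * Wt e \<Phi> x" for x
      unfolding w using assms by (simp add: Wt_def)
    have "sum (Wt e \<Phi>') ?A \<le> sum (\<lambda>x. 1 * Wt e \<Phi> x) ?A" by (intro sum_mono le2)
    then have "sum (Wt e \<Phi>') ?A \<le> 1 * sum (Wt e \<Phi>) ?A" by simp
    then show ?thesis using le1 assms by (intro dp_dir[where al="exp e" and be=1]) auto
  qed
qed



lemma Mech_util:
  assumes inst: "kxor_instance k n \<Phi>" and e: "0 < e" "e \<le> 1"
  shows "measure_pmf.expectation (Mech e n \<Phi>) (\<lambda>x. real (val \<Phi> x))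
           \<ge> (1/2 + (1/32) * e) * real (OPT n \<Phi>)"
proof -
  let ?A = "assignments n"
  have fin: "finite ?A" and ne: "?A \<noteq> {}" by (simp_all add: assignments_finite assignments_nonempty)
  have finP: "finite \<Phi>" using inst unfolding kxor_instance_def by auto
  have "OPT n \<Phi> \<in> val \<Phi> ` ?A" unfolding OPT_def using fin ne by (intro Max_in) auto
  then obtain xs where xs: "xs \<in> ?A" "val \<Phi> xs = OPT n \<Phi>" by auto
  define G where "G = {c\<in>\<Phi>. satisfies xs c}"
  have cardG: "card G = OPT n \<Phi>" using xs unfolding G_def val_def by simp
  have GP: "G \<subseteq> \<Phi>" unfolding G_def by auto
  define a where "a = (exp e + 1) / 2"
  define d where "d = (exp e - 1) / 2"
  have a1: "1 \<le> a" unfolding a_def using e by simp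
  have d0: "0 \<le> d" unfolding d_def using e by simp
  have pw: "(\<Prod>l\<in>G. a + d * sg l x) \<le> Wt e \<Phi> x" if x: "x \<in> ?A" for x
  proof -
    have eqG: "exp (e * of_bool (satisfies x l)) = a + d * sg l x" if l: "l \<in> G" for l
    proof -
      have "l \<in> \<Phi>" using l GP by auto
      from exp_sat[OF inst this x, of e] show ?thesis unfolding a_def d_def .
    qed
    have "Wt e \<Phi> x = exp (\<Sum>l\<in>\<Phi>. e * of_bool (satisfies x l))"
      unfolding Wt_def val_sum[OF finP] by (simp add: sum_distrib_left)
    also have "\<dots> = (\<Prod>l\<in>\<Phi>. exp (e * of_bool (satisfies x l)))"
      by (rule exp_sum[OF finP])
    also have "\<dots> = (\<Prod>l\<in>\<Phi> - G. exp (e * of_bool (satisfies x l))) *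
                     (\<Prod>l\<in>G. exp (e * of_bool (satisfies x l)))"
      using finP GP by (simp add: prod.subset_diff)
    also have "(\<Prod>l\<in>G. exp (e * of_bool (satisfies x l))) = (\<Prod>l\<in>G. a + d * sg l x)"
      using eqG by (rule prod.cong[OF refl])
    finally have eq: "Wt e \<Phi> x = (\<Prod>l\<in>\<Phi> - G. exp (e * of_bool (satisfies x l))) *
                     (\<Prod>l\<in>G. a + d * sg l x)" .
    have ge1: "1 \<le> (\<Prod>l\<in>\<Phi> - G. exp (e * of_bool (satisfies x l)))"
      using e by (intro prod_ge_1) auto
    have "0 \<le> (\<Prod>l\<in>G. exp (e * of_bool (satisfies x l)))" by (intro prod_nonneg) auto
    then have nn: "0 \<le> (\<Prod>l\<in>G. a + d * sg l x)"
      using prod.cong[OF refl eqG, of G] by simp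
    have "1 * (\<Prod>l\<in>G. a + d * sg l x) \<le> (\<Prod>l\<in>\<Phi> - G. exp (e * of_bool (satisfies x l))) * (\<Prod>l\<in>G. a + d * sg l x)"
      using ge1 nn by (intro mult_right_mono) auto
    then show ?thesis unfolding eq by simp
  qed
  define Z where "Z = sum (Wt e \<Phi>) ?A"
  define N where "N = real (card ?A)"
  have N: "0 < N" unfolding N_def using fin ne by (simp add: card_gt_0_iff)
  have "N * a ^ OPT n \<Phi> \<le> (\<Sum>x\<in>?A. \<Prod>l\<in>G. a + d * sg l x)"
    unfolding N_def cardG[symmetric] using key[OF inst xs(1) G_def] a1 d0 by simp
  also have "\<dots> \<le> Z" unfolding Z_def using pw by (intro sum_mono) auto
  finally have ZN: "N * a ^ OPT n \<Phi> \<le> Z" .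
  have "real (OPT n \<Phi>) * ln a = ln (a ^ OPT n \<Phi>)" using a1 by (simp add: ln_realpow)
  also have "\<dots> \<le> ln (Z / N)"
  proof -
    have p: "0 < a ^ OPT n \<Phi>" using a1 by simp
    have "a ^ OPT n \<Phi> \<le> Z / N" using ZN N by (simp add: field_simps mult.commute)
    then show ?thesis using p by (subst ln_le_cancel_iff) auto
  qed
  also have "\<dots> \<le> e * (\<Sum>x\<in>?A. (Wt e \<Phi> x / Z) * real (val \<Phi> x))"
    unfolding Z_def N_def by (rule gibbs_ineq[OF fin ne]) (simp add: Wt_def)
  also have "(\<Sum>x\<in>?A. (Wt e \<Phi> x / Z) * real (val \<Phi> x))
      = measure_pmf.expectation (Mech e n \<Phi>) (\<lambda>x. real (val \<Phi> x))"
    unfolding Mech_def Z_def by (rule expectation_gibbs[OF fin ne Wt_pos, symmetric])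
  finally have I: "real (OPT n \<Phi>) * ln a \<le> e * measure_pmf.expectation (Mech e n \<Phi>) (\<lambda>x. real (val \<Phi> x))" .
  have "e * ((1/2 + (1/32) * e) * real (OPT n \<Phi>)) = real (OPT n \<Phi>) * (e/2 + e^2/32)"
    by (simp add: algebra_simps power2_eq_square)
  also have "\<dots> \<le> real (OPT n \<Phi>) * ln a"
    unfolding a_def using ln_a_bound[OF e] by (intro mult_left_mono) auto
  finally have J: "e * ((1/2 + (1/32) * e) * real (OPT n \<Phi>)) \<le> real (OPT n \<Phi>) * ln a" .
  have "e * ((1/2 + (1/32) * e) * real (OPT n \<Phi>)) \<le> e * measure_pmf.expectation (Mech e n \<Phi>) (\<lambda>x. real (val \<Phi> x))"
    using J I by linarith
  then show ?thesis using e(1) by (simp only: mult_le_cancel_left_pos)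
qed

theorem corollary4p6:
  fixes k :: nat
  assumes "odd k"
  shows "\<exists>c0 c :: real. c0 > 0 \<and> c > 0 \<and>
    (\<forall>\<epsilon>. 0 < \<epsilon> \<and> \<epsilon> \<le> c0 \<longrightarrow>
      (\<exists>M :: nat \<Rightarrow> constraint set \<Rightarrow> assignment pmf.
         pure_dp k \<epsilon> M \<and>
         (\<forall>n \<Phi>. kxor_instance k n \<Phi> \<longrightarrow>
            set_pmf (M n \<Phi>) \<subseteq> assignments n \<and>
            measure_pmf.expectation (M n \<Phi>) (\<lambda>x. real (val \<Phi> x))
              \<ge> (1/2 + c * \<epsilon>) * real (OPT n \<Phi>))))"
proof -
  have "\<forall>\<epsilon>. 0 < \<epsilon> \<and> \<epsilon> \<le> 1 \<longrightarrow>
      (\<exists>M :: nat \<Rightarrow> constraint set \<Rightarrow> assignment pmf.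
         pure_dp k \<epsilon> M \<and>
         (\<forall>n \<Phi>. kxor_instance k n \<Phi> \<longrightarrow>
            set_pmf (M n \<Phi>) \<subseteq> assignments n \<and>
            measure_pmf.expectation (M n \<Phi>) (\<lambda>x. real (val \<Phi> x))
              \<ge> (1/2 + (1/32) * \<epsilon>) * real (OPT n \<Phi>)))"
  proof (intro allI impI)
    fix \<epsilon> :: real assume e: "0 < \<epsilon> \<and> \<epsilon> \<le> 1"
    have dp: "pure_dp k \<epsilon> (Mech \<epsilon>)" using e by (intro Mech_dp) auto
    have st: "set_pmf (Mech \<epsilon> n \<Phi>) \<subseteq> assignments n" for n \<Phi>
      unfolding Mech_def by (rule set_gibbs[OF assignments_finite assignments_nonempty Wt_pos])
    have ut: "(1/2 + (1/32) * \<epsilon>) * real (OPT n \<Phi>) \<le> measure_pmf.expectation (Mech \<epsilon> n \<Phi>) (\<lambda>x. real (val \<Phi> x))"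
      if "kxor_instance k n \<Phi>" for n \<Phi>
      using Mech_util[OF that] e by blast
    show "\<exists>M :: nat \<Rightarrow> constraint set \<Rightarrow> assignment pmf.
         pure_dp k \<epsilon> M \<and>
         (\<forall>n \<Phi>. kxor_instance k n \<Phi> \<longrightarrow>
            set_pmf (M n \<Phi>) \<subseteq> assignments n \<and>
            measure_pmf.expectation (M n \<Phi>) (\<lambda>x. real (val \<Phi> x))
              \<ge> (1/2 + (1/32) * \<epsilon>) * real (OPT n \<Phi>))"
      using dp st ut by blast
  qed
  then show ?thesis by (intro exI[of _ 1] exI[of _ "1/32"]) auto
qed

end
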